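(* (i) Let $H$ be a primitive permutation group on a finite set $\Delta$ that is not cyclic of prime order, and let $K\le S_n$ ($n\ge2$) be a transitive group no cyclic subgroup of which is transitive. Then $H\wr K$ in the product action on $\Delta^n$ is a primitive group every element of which is an imprimitive permutation of $\Delta^n$. (ii) Let $m\ge1$ and let $G=S_3\wr C_2^m$ in the product action, where $C_2^m$ acts regularly on $2^m$ points; so $G$ is a primitive group of degree $3^{2^m}$. Then any subgroup of $G$ generated by fewer than $m$ elements preserves a partition of the $3^{2^m}$ points into blocks of equal size $b$ with $1<b<3^{2^m}$; in particular at least $m$ elements are needed to generate a primitive subgroup of $G$.
   Context: For $H\le{\rm Sym}(\Delta)$ and $K\le S_n$, $H\wr K$ in product action acts on $\Delta^n$ by applying $h_i\in H$ to the $i$-th coordinate and permuting coordinates by $\sigma\in K$. A permutation of a set $\Omega$ of size $N$ is imprimitive if it preserves a partition of $\Omega$ into blocks of equal size $b$ with $1<b<N$. *)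

theory Defs
  imports "HOL-Combinatorics.Permutations" "HOL-Library.FuncSet" "HOL-Computational_Algebra.Primes"
begin

definition perm_group :: "'a set \<Rightarrow> ('a \<Rightarrow> 'a) set \<Rightarrow> bool" where
  "perm_group D G \<longleftrightarrow> G \<subseteq> {g. g permutes D} \<and> id \<in> G \<and>
     (\<forall>g\<in>G. \<forall>h\<in>G. g \<circ> h \<in> G) \<and> (\<forall>g\<in>G. inv g \<in> G)"

definition transitive_on :: "'a set \<Rightarrow> ('a \<Rightarrow> 'a) set \<Rightarrow> bool" where
  "transitive_on D G \<longleftrightarrow> (\<forall>x\<in>D. \<forall>y\<in>D. \<exists>g\<in>G. g x = y)"

definition cyc :: "('a \<Rightarrow> 'a) \<Rightarrow> ('a \<Rightarrow> 'a) set" where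
  "cyc g = range (\<lambda>k::nat. g ^^ k)"

inductive_set gen_by :: "('a \<Rightarrow> 'a) set \<Rightarrow> ('a \<Rightarrow> 'a) set" for S where
  gen_id: "id \<in> gen_by S"
| gen_el: "s \<in> S \<Longrightarrow> s \<in> gen_by S"
| gen_comp: "g \<in> gen_by S \<Longrightarrow> h \<in> gen_by S \<Longrightarrow> g \<circ> h \<in> gen_by S"
| gen_inv: "g \<in> gen_by S \<Longrightarrow> inv g \<in> gen_by S"

definition is_partition :: "'a set \<Rightarrow> 'a set set \<Rightarrow> bool" where
  "is_partition D P \<longleftrightarrow> \<Union>P = D \<and> {} \<notin> P \<and> (\<forall>B\<in>P. \<forall>C\<in>P. B \<noteq> C \<longrightarrow> B \<inter> C = {})"

definition preserves :: "('a \<Rightarrow> 'a) set \<Rightarrow> 'a set set \<Rightarrow> bool" where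
  "preserves G P \<longleftrightarrow> (\<forall>g\<in>G. \<forall>B\<in>P. g ` B \<in> P)"

definition preserves_nontrivial_partition :: "'a set \<Rightarrow> ('a \<Rightarrow> 'a) set \<Rightarrow> bool" where
  "preserves_nontrivial_partition D G \<longleftrightarrow>
     (\<exists>P b. is_partition D P \<and> (\<forall>B\<in>P. card B = b) \<and> 1 < b \<and> b < card D \<and> preserves G P)"

definition imprimitive_perm :: "'a set \<Rightarrow> ('a \<Rightarrow> 'a) \<Rightarrow> bool" where
  "imprimitive_perm D g \<longleftrightarrow> preserves_nontrivial_partition D {g}"

definition primitive :: "'a set \<Rightarrow> ('a \<Rightarrow> 'a) set \<Rightarrow> bool" where
  "primitive D G \<longleftrightarrow> finite D \<and> 2 \<le> card D \<and> perm_group D G \<and> transitive_on D G \<and>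
     (\<forall>P. is_partition D P \<and> preserves G P \<longrightarrow> P = {D} \<or> (\<forall>B\<in>P. card B = 1))"

definition prod_dom :: "'a set \<Rightarrow> nat \<Rightarrow> (nat \<Rightarrow> 'a) set" where
  "prod_dom D n = PiE {0..<n} (\<lambda>_. D)"

text \<open>The element (h_0,...,h_{n-1}; sigma): apply h_i to coordinate i and move it to
  position sigma(i).\<close>
definition wr_elem :: "'a set \<Rightarrow> nat \<Rightarrow> (nat \<Rightarrow> 'a \<Rightarrow> 'a) \<Rightarrow> (nat \<Rightarrow> nat)
    \<Rightarrow> (nat \<Rightarrow> 'a) \<Rightarrow> (nat \<Rightarrow> 'a)" where
  "wr_elem D n h \<sigma> = (\<lambda>x. if x \<in> prod_dom D n
      then (\<lambda>j\<in>{0..<n}. h (inv \<sigma> j) (x (inv \<sigma> j))) else x)"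

definition wr_prod :: "'a set \<Rightarrow> ('a \<Rightarrow> 'a) set \<Rightarrow> (nat \<Rightarrow> nat) set \<Rightarrow> nat
    \<Rightarrow> ((nat \<Rightarrow> 'a) \<Rightarrow> (nat \<Rightarrow> 'a)) set" where
  "wr_prod D H K n = {wr_elem D n h \<sigma> | h \<sigma>. (\<forall>i<n. h i \<in> H) \<and> \<sigma> \<in> K}"

text \<open>S_3 on {0,1,2}, and C_2^m acting regularly on {0..<2^m} by bitwise xor.\<close>
definition S3 :: "(nat \<Rightarrow> nat) set" where
  "S3 = {f. f permutes {0..<3}}"

definition C2pow :: "nat \<Rightarrow> (nat \<Rightarrow> nat) set" where
  "C2pow m = {(\<lambda>i. if i < 2^m then xor i v else i) | v. v < 2^m}"

end

theory Submission
  imports Defs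
begin

lemma perm_groupD:
  assumes "perm_group D G"
  shows "\<And>g. g\<in>G \<Longrightarrow> g permutes D" "id \<in> G"
    "\<And>g h. g\<in>G \<Longrightarrow> h\<in>G \<Longrightarrow> g \<circ> h \<in> G" "\<And>g. g\<in>G \<Longrightarrow> inv g \<in> G"
  using assms unfolding perm_group_def by auto

lemma prim_rel:
  assumes prim: "primitive D H"
    and R: "\<And>x y. R x y \<Longrightarrow> x \<in> D \<and> y \<in> D"
    and refl: "\<And>x. x \<in> D \<Longrightarrow> R x x"
    and sym: "\<And>x y. R x y \<Longrightarrow> R y x"
    and trans: "\<And>x y z. R x y \<Longrightarrow> R y z \<Longrightarrow> R x z"
    and inv: "\<And>h x y. h \<in> H \<Longrightarrow> R x y \<Longrightarrow> R (h x) (h y)"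
  shows "(\<forall>x\<in>D. \<forall>y\<in>D. R x y) \<or> (\<forall>x y. R x y \<longrightarrow> x = y)"
proof -
  have pg: "perm_group D H" using prim by (simp add: primitive_def)
  define cl where "cl x = {y\<in>D. R x y}" for x
  define P where "P = cl ` D"
  have part: "is_partition D P"
    unfolding is_partition_def P_def cl_def
  proof (intro conjI ballI impI)
    show "\<Union> ((\<lambda>x. {y \<in> D. R x y}) ` D) = D" using refl by blast
    show "{} \<notin> (\<lambda>x. {y \<in> D. R x y}) ` D" using refl by blast
    fix B C assume "B \<in> (\<lambda>x. {y \<in> D. R x y}) ` D" "C \<in> (\<lambda>x. {y \<in> D. R x y}) ` D" "B \<noteq> C"
    then obtain b c where "b \<in> D" "c \<in> D" "B = {y \<in> D. R b y}" "C = {y \<in> D. R c y}" by auto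
    thus "B \<inter> C = {}" using \<open>B \<noteq> C\<close> sym trans by blast
  qed
  have pres: "preserves H P"
    unfolding preserves_def
  proof (intro ballI)
    fix h B assume h: "h \<in> H" and B: "B \<in> P"
    then obtain x where x: "x \<in> D" "B = cl x" by (auto simp: P_def)
    have hp: "h permutes D" using perm_groupD(1)[OF pg h] .
    have ih: "inv h \<in> H" using perm_groupD(4)[OF pg h] .
    have "h ` cl x = cl (h x)"
    proof
      show "h ` cl x \<subseteq> cl (h x)" using inv[OF h] hp R by (auto simp: cl_def permutes_in_image)
      show "cl (h x) \<subseteq> h ` cl x"
      proof
        fix y assume "y \<in> cl (h x)"
        hence y: "y \<in> D" "R (h x) y" by (auto simp: cl_def)
        have "R (inv h (h x)) (inv h y)" using inv[OF ih y(2)] .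
        hence "R x (inv h y)" using permutes_inverses(2)[OF hp] by simp
        moreover have "h (inv h y) = y" using permutes_inverses(1)[OF hp] by simp
        ultimately show "y \<in> h ` cl x" using R by (force simp: cl_def)
      qed
    qed
    moreover have "h x \<in> D" using hp x(1) by (simp add: permutes_in_image)
    ultimately show "h ` B \<in> P" using x by (auto simp: P_def)
  qed
  from prim part pres have "P = {D} \<or> (\<forall>B\<in>P. card B = 1)" by (auto simp: primitive_def)
  thus ?thesis
  proof
    assume "P = {D}"
    hence "\<forall>x\<in>D. cl x = D" by (auto simp: P_def)
    thus ?thesis by (auto simp: cl_def)
  next
    assume c: "\<forall>B\<in>P. card B = 1"
    { fix x y assume "R x y"
      hence xy: "x \<in> D" "y \<in> D" using R by auto
      hence "card (cl x) = 1" using c by (auto simp: P_def)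
      moreover have "x \<in> cl x" "y \<in> cl x" using \<open>R x y\<close> xy refl by (auto simp: cl_def)
      ultimately have "x = y" by (metis card_1_singletonE singletonD)
    }
    thus ?thesis by blast
  qed
qed

lemma perm_group_pow: "perm_group D H \<Longrightarrow> g \<in> H \<Longrightarrow> g ^^ k \<in> H"
  by (induction k) (auto simp: perm_group_def)

lemma perm_group_finite: "perm_group D H \<Longrightarrow> finite D \<Longrightarrow> finite H"
  by (rule finite_subset[OF _ finite_permutations[of D]]) (auto simp: perm_group_def)

lemma cancel_right: "g permutes D \<Longrightarrow> f \<circ> g = g \<Longrightarrow> f = id"
proof
  fix x assume "g permutes D" "f \<circ> g = g"
  hence "f (g (inv g x)) = g (inv g x)" by (metis comp_apply)
  thus "f x = id x" using permutes_inverses(1)[OF \<open>g permutes D\<close>] by simp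
qed

lemma pow_cancel:
  assumes "g permutes D" "g ^^ a = g ^^ b" "a < b"
  shows "g ^^ (b - a) = id"
proof -
  have gp: "(g ^^ a) permutes D"
  proof (induction a)
    case 0 show ?case by (simp only: funpow.simps permutes_id)
  next
    case (Suc a) show ?case unfolding funpow.simps by (rule permutes_compose[OF Suc assms(1)])
  qed
  have "g ^^ (b - a) \<circ> g ^^ a = g ^^ (b - a + a)" by (simp only: funpow_add)
  also have "\<dots> = g ^^ a" using assms(2,3) by simp
  finally have "g ^^ (b - a) \<circ> g ^^ a = g ^^ a" .
  thus ?thesis using cancel_right[OF gp] by blast
qed

lemma exists_order:
  assumes pg: "perm_group D H" and fin: "finite D" and g: "g \<in> H"
  shows "\<exists>r>0. g ^^ r = id"
proof -
  have "finite H" using perm_group_finite[OF pg fin] .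
  moreover have "range (\<lambda>k::nat. g ^^ k) \<subseteq> H" using perm_group_pow[OF pg g] by auto
  ultimately have "finite (range (\<lambda>k::nat. g ^^ k))" by (rule finite_subset[rotated])
  hence "\<not> inj (\<lambda>k::nat. g ^^ k)" using finite_imageD infinite_UNIV_nat by blast
  then obtain a b :: nat where ab: "a \<noteq> b" "g ^^ a = g ^^ b" unfolding inj_def by blast
  have gp: "g permutes D" using perm_groupD(1)[OF pg g] .
  show ?thesis
  proof (cases "a < b")
    case True thus ?thesis using pow_cancel[OF gp ab(2)] by (intro exI[of _ "b - a"]) auto
  next
    case False hence "b < a" using ab(1) by simp
    thus ?thesis using pow_cancel[OF gp ab(2)[symmetric]] by (intro exI[of _ "a - b"]) auto
  qed
qed

lemma cyc_subgroup:
  assumes pg: "perm_group D H" and fin: "finite D" and g: "g \<in> H"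
  shows "cyc g \<subseteq> H" "id \<in> cyc g" "\<And>a b. a \<in> cyc g \<Longrightarrow> b \<in> cyc g \<Longrightarrow> a \<circ> b \<in> cyc g"
    "\<And>a. a \<in> cyc g \<Longrightarrow> inv a \<in> cyc g"
proof -
  show "cyc g \<subseteq> H" using perm_group_pow[OF pg g] by (auto simp: cyc_def)
  show "id \<in> cyc g" unfolding cyc_def by (rule range_eqI[of _ _ 0]) simp
  show "\<And>a b. a \<in> cyc g \<Longrightarrow> b \<in> cyc g \<Longrightarrow> a \<circ> b \<in> cyc g"
  proof -
    fix a b assume "a \<in> cyc g" "b \<in> cyc g"
    then obtain i j where "a = g ^^ i" "b = g ^^ j" by (auto simp: cyc_def)
    hence "a \<circ> b = g ^^ (i + j)" by (simp add: funpow_add)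
    thus "a \<circ> b \<in> cyc g" by (simp add: cyc_def)
  qed
  obtain r where r: "r > 0" "g ^^ r = id" using exists_order[OF assms] by blast
  fix a assume "a \<in> cyc g"
  then obtain k where k: "a = g ^^ k" by (auto simp: cyc_def)
  have "g ^^ (r * k) = (g ^^ r) ^^ k" by (simp only: funpow_mult)
  hence e: "g ^^ (r * k) = id" using r(2) by simp
  obtain r' where r': "r = Suc r'" using r(1) gr0_implies_Suc by blast
  have "(r - 1) * k + k = r * k" unfolding r' by simp
  hence "g ^^ k \<circ> g ^^ ((r - 1) * k) = id" "g ^^ ((r - 1) * k) \<circ> g ^^ k = id"
    using e by (metis funpow_add add.commute)+
  hence "inv a = g ^^ ((r - 1) * k)" unfolding k by (rule inv_unique_comp)
  thus "inv a \<in> cyc g" by (auto simp: cyc_def)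
qed


lemma regular_subgroups:
  assumes prim: "primitive D H" and reg: "\<forall>x\<in>D. \<forall>h\<in>H. h x = x \<longrightarrow> h = id"
    and LH: "L \<subseteq> H" and Lid: "id \<in> L" and Lc: "\<And>a b. a \<in> L \<Longrightarrow> b \<in> L \<Longrightarrow> a \<circ> b \<in> L"
    and Li: "\<And>a. a \<in> L \<Longrightarrow> inv a \<in> L"
  shows "L = {id} \<or> L = H"
proof -
  have pg: "perm_group D H" and tr: "transitive_on D H" and c2: "2 \<le> card D" and fin: "finite D"
    using prim by (auto simp: primitive_def)
  have "D \<noteq> {}" using c2 by auto
  then obtain d where d: "d \<in> D" by blast
  have same: "a = b" if "a \<in> H" "b \<in> H" "a d = b d" for a b
  proof -
    have bp: "b permutes D" using perm_groupD(1)[OF pg that(2)] .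
    have "inv b \<circ> a \<in> H" using perm_groupD(3,4)[OF pg] that by blast
    moreover have "(inv b \<circ> a) d = d" using that(3) permutes_inverses(2)[OF bp] by simp
    ultimately have "inv b \<circ> a = id" using reg d by blast
    hence "b \<circ> (inv b \<circ> a) = b" by simp
    thus "a = b" using permutes_inv_o(1)[OF bp] by (simp add: o_assoc)
  qed
  have LHm: "l \<in> H" if "l \<in> L" for l using LH that by blast
  define R where "R x y \<longleftrightarrow> (\<exists>a\<in>H. \<exists>l\<in>L. x = a d \<and> y = (a \<circ> l) d)" for x y
  have inD: "a d \<in> D" if "a \<in> H" for a
    using perm_groupD(1)[OF pg that] d by (simp add: permutes_in_image)
  have "(\<forall>x\<in>D. \<forall>y\<in>D. R x y) \<or> (\<forall>x y. R x y \<longrightarrow> x = y)"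
  proof (rule prim_rel[OF prim])
    show "x \<in> D \<and> y \<in> D" if Rxy: "R x y" for x y
    proof -
      obtain a l where al: "a \<in> H" "l \<in> L" "x = a d" "y = (a \<circ> l) d" using Rxy R_def by blast
      have "a \<circ> l \<in> H" using perm_groupD(3)[OF pg al(1) LHm[OF al(2)]] .
      thus ?thesis using inD[OF al(1)] inD[of "a \<circ> l"] al(3,4) by simp
    qed
    show "R x x" if xD: "x \<in> D" for x
    proof -
      obtain a where "a \<in> H" "a d = x" using tr d xD by (auto simp: transitive_on_def)
      thus ?thesis unfolding R_def using Lid by (intro bexI[of _ a] bexI[of _ id]) auto
    qed
    show "R y x" if Rxy: "R x y" for x y
    proof -
      obtain a l where al: "a \<in> H" "l \<in> L" "x = a d" "y = (a \<circ> l) d" using Rxy R_def by blast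
      have lp: "l permutes D" using perm_groupD(1)[OF pg LHm[OF al(2)]] .
      have "(a \<circ> l) \<circ> inv l = a" using permutes_inv_o(1)[OF lp] by (simp add: o_assoc[symmetric])
      thus ?thesis unfolding R_def using al Li perm_groupD(3)[OF pg al(1) LHm[OF al(2)]]
        by (intro bexI[of _ "a \<circ> l"] bexI[of _ "inv l"]) auto
    qed
    show "R x z" if Rxy: "R x y" and Ryz: "R y z" for x y z
    proof -
      obtain a l where al: "a \<in> H" "l \<in> L" "x = a d" "y = (a \<circ> l) d" using Rxy R_def by blast
      obtain b l' where bl: "b \<in> H" "l' \<in> L" "y = b d" "z = (b \<circ> l') d" using Ryz R_def by blast
      have "a \<circ> l = b" using same[of "a \<circ> l" b] perm_groupD(3)[OF pg al(1) LHm[OF al(2)]] bl al by simp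
      hence "z = (a \<circ> (l \<circ> l')) d" using bl by (simp add: o_assoc)
      thus ?thesis unfolding R_def using al Lc[OF al(2) bl(2)] by blast
    qed
    show "R (h x) (h y)" if hH: "h \<in> H" and Rxy: "R x y" for h x y
    proof -
      obtain a l where al: "a \<in> H" "l \<in> L" "x = a d" "y = (a \<circ> l) d" using Rxy R_def by blast
      thus ?thesis unfolding R_def using perm_groupD(3)[OF pg hH al(1)]
        by (intro bexI[of _ "h \<circ> a"] bexI[of _ l]) auto
    qed
  qed
  thus ?thesis
  proof
    assume t: "\<forall>x\<in>D. \<forall>y\<in>D. R x y"
    have "H \<subseteq> L"
    proof
      fix h assume h: "h \<in> H"
      have "R d (h d)" using t d inD[OF h] by blast
      then obtain a l where al: "a \<in> H" "l \<in> L" "d = a d" "h d = (a \<circ> l) d" using R_def by blast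
      have "a = id" using same[of a id] al(1,3) perm_groupD(2)[OF pg] by simp
      hence "h = l" using same[of h l] h LHm[OF al(2)] al(4) by simp
      thus "h \<in> L" using al(2) by simp
    qed
    thus ?thesis using LH by blast
  next
    assume t: "\<forall>x y. R x y \<longrightarrow> x = y"
    have "L \<subseteq> {id}"
    proof
      fix l assume l: "l \<in> L"
      have "R d (l d)" unfolding R_def using l perm_groupD(2)[OF pg]
        by (intro bexI[of _ id] bexI[of _ l]) auto
      hence "d = l d" using t by blast
      hence "l = id" using same[of l id] LHm[OF l] perm_groupD(2)[OF pg] by simp
      thus "l \<in> {id}" by simp
    qed
    thus ?thesis using Lid by blast
  qed
qed

lemma regular_prime:
  assumes prim: "primitive D H" and reg: "\<forall>x\<in>D. \<forall>h\<in>H. h x = x \<longrightarrow> h = id"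
  shows "\<exists>g\<in>H. H = cyc g \<and> prime (card H)"
proof -
  have pg: "perm_group D H" and tr: "transitive_on D H" and c2: "2 \<le> card D" and fin: "finite D"
    using prim by (auto simp: primitive_def)
  have cycH: "cyc g = H" if "g \<in> H" "g \<noteq> id" for g
  proof -
    note cs = cyc_subgroup[OF pg fin that(1)]
    have "cyc g = {id} \<or> cyc g = H" by (rule regular_subgroups[OF prim reg cs])
    moreover have "g \<in> cyc g" unfolding cyc_def by (rule range_eqI[of _ _ 1]) simp
    ultimately show ?thesis using that(2) by blast
  qed
  obtain d e where de: "d \<in> D" "e \<in> D" "d \<noteq> e"
  proof -
    have "D \<noteq> {}" using c2 by auto
    then obtain d where d: "d \<in> D" by blast
    have "\<exists>e\<in>D. e \<noteq> d"
    proof (rule ccontr)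
      assume "\<not> (\<exists>e\<in>D. e \<noteq> d)"
      hence "D \<subseteq> {d}" by blast
      hence "card D \<le> card {d}" by (rule card_mono[rotated]) simp
      thus False using c2 by simp
    qed
    thus ?thesis using that d by blast
  qed
  obtain g where g: "g \<in> H" "g d = e" using tr de by (auto simp: transitive_on_def)
  have gid: "g \<noteq> id" using g de by auto
  have gp: "g permutes D" using perm_groupD(1)[OF pg g(1)] .
  define P where "P r \<longleftrightarrow> 0 < r \<and> g ^^ r = id" for r
  have exP: "\<exists>r. P r" using exists_order[OF pg fin g(1)] P_def by blast
  define r where "r = (LEAST r. P r)"
  have Pr: "P r" unfolding r_def using exP by (rule LeastI_ex)
  have minr: "\<not> P s" if "s < r" for s using not_less_Least[of s P] that r_def by blast
  have r0: "0 < r" "g ^^ r = id" using Pr P_def by auto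
  have r1: "r \<noteq> 1" using r0 gid by auto
  have modr: "g ^^ k = g ^^ (k mod r)" for k
  proof
    fix x show "(g ^^ k) x = (g ^^ (k mod r)) x" using funpow_mod_eq[where f=g and n=r and m=k and x=x] r0(2) by simp
  qed
  have Heq: "H = (\<lambda>k. g ^^ k) ` {..<r}"
  proof -
    have "H = cyc g" using cycH[OF g(1) gid] by simp
    also have "\<dots> = (\<lambda>k. g ^^ k) ` {..<r}"
    proof
      show "cyc g \<subseteq> (\<lambda>k. g ^^ k) ` {..<r}"
      proof
        fix f assume "f \<in> cyc g"
        then obtain k where "f = g ^^ k" unfolding cyc_def by blast
        hence "f = g ^^ (k mod r)" using modr by simp
        moreover have "k mod r \<in> {..<r}" using r0(1) by simp
        ultimately show "f \<in> (\<lambda>k. g ^^ k) ` {..<r}" by blast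
      qed
      show "(\<lambda>k. g ^^ k) ` {..<r} \<subseteq> cyc g" unfolding cyc_def by auto
    qed
    finally show ?thesis .
  qed
  have inj: "inj_on (\<lambda>k. g ^^ k) {..<r}"
  proof (rule inj_onI, rule ccontr)
    fix a b assume ab: "a \<in> {..<r}" "b \<in> {..<r}" "g ^^ a = g ^^ b" "a \<noteq> b"
    show False
    proof (cases "a < b")
      case True
      have e: "g ^^ (b - a) = id" by (rule pow_cancel[OF gp ab(3) True])
      have "b - a < r" using ab(2) by simp
      hence "\<not> P (b - a)" by (rule minr)
      thus False using e True unfolding P_def by simp
    next
      case False hence "b < a" using ab(4) by simp
      have e: "g ^^ (a - b) = id" by (rule pow_cancel[OF gp ab(3)[symmetric] \<open>b < a\<close>])
      have "a - b < r" using ab(1) by simp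
      hence "\<not> P (a - b)" by (rule minr)
      thus False using e \<open>b < a\<close> unfolding P_def by simp
    qed
  qed
  have cardH: "card H = r" using Heq inj by (simp add: card_image)
  have "prime r"
  proof (subst prime_nat_iff, intro conjI allI impI)
    show "1 < r" using r0(1) r1 by simp
    fix a assume a: "a dvd r"
    show "a = 1 \<or> a = r"
    proof (rule ccontr)
      assume na: "\<not> (a = 1 \<or> a = r)"
      have a0: "0 < a" using a r0(1) by (auto intro: dvd_pos_nat)
      have ar: "a < r" using na dvd_imp_le[OF a r0(1)] by simp
      have gaid: "g ^^ a \<noteq> id" using minr[OF ar] a0 P_def by auto
      have gaH: "g ^^ a \<in> H" using perm_group_pow[OF pg g(1)] .
      have "g \<in> cyc (g ^^ a)" using cycH[OF gaH gaid] g(1) by simp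
      then obtain k where k: "g = (g ^^ a) ^^ k" unfolding cyc_def by blast
      hence k': "g = g ^^ (a * k)" by (simp add: funpow_mult)
      have ak: "a * k \<noteq> 0"
      proof
        assume "a * k = 0" hence "g ^^ (a * k) = id" by (simp only: funpow.simps(1))
        hence "g = id" using k' by (rule trans[rotated])
        thus False using gid by simp
      qed
      have "g ^^ (a * k - 1) \<circ> g = g ^^ (a * k - 1) \<circ> g ^^ 1" by simp
      also have "\<dots> = g ^^ (a * k - 1 + 1)" by (simp only: funpow_add)
      also have "\<dots> = g" using ak k'[symmetric] by simp
      finally have "g ^^ (a * k - 1) = id" using cancel_right[OF gp] by blast
      moreover have "g ^^ (a * k - 1) = g ^^ ((a * k - 1) mod r)" by (rule modr)
      ultimately have "g ^^ ((a * k - 1) mod r) = id" by simp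
      moreover have "(a * k - 1) mod r < r" using r0(1) by simp
      ultimately have "(a * k - 1) mod r = 0" using minr[of "(a * k - 1) mod r"] unfolding P_def by auto
      hence "r dvd a * k - 1" by (simp add: dvd_eq_mod_eq_0)
      hence "a dvd a * k - 1" using dvd_trans[OF a] by blast
      moreover have "a dvd a * k" by simp
      ultimately have "a dvd a * k - (a * k - 1)" by (rule dvd_diff_nat[rotated])
      moreover have "a * k - (a * k - 1) = 1" using ak by simp
      ultimately have "a dvd 1" by simp
      thus False using na by simp
    qed
  qed
  thus ?thesis using g(1) cycH[OF g(1) gid] cardH by auto
qed


lemma stab_sep:
  assumes prim: "primitive D H" and nr: "\<not> (\<exists>g\<in>H. H = cyc g \<and> prime (card H))"
    and x: "x \<in> D" and y: "y \<in> D" and xy: "x \<noteq> y"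
  shows "\<exists>f\<in>H. f x = x \<and> f y \<noteq> y"
proof -
  have pg: "perm_group D H" and tr: "transitive_on D H" and fin: "finite D"
    using prim by (auto simp: primitive_def)
  have finH: "finite H" by (rule perm_group_finite[OF pg fin])
  define stab where "stab z = {h\<in>H. h z = z}" for z
  define cj where "cj h g = h \<circ> g \<circ> inv h" for h g :: "'a \<Rightarrow> 'a"
  have cjH: "cj h g \<in> H" if "h \<in> H" "g \<in> H" for h g
    unfolding cj_def using perm_groupD(3,4)[OF pg] that by blast
  have cjinj: "inj_on (cj h) A" if hH: "h \<in> H" for h A
  proof (rule inj_onI)
    fix g g' assume "g \<in> A" "g' \<in> A" "cj h g = cj h g'"
    have hp: "h permutes D" using perm_groupD(1)[OF pg hH] .
    have "inv h \<circ> cj h g \<circ> h = g" for g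
      unfolding cj_def by (simp add: fun_eq_iff permutes_inverses[OF hp])
    thus "g = g'" using \<open>cj h g = cj h g'\<close> by metis
  qed
  have stab_cj: "stab (h z) = cj h ` stab z" if hH: "h \<in> H" and zD: "z \<in> D" for h z
  proof
    have hp: "h permutes D" using perm_groupD(1)[OF pg hH] .
    show "cj h ` stab z \<subseteq> stab (h z)"
      using cjH[OF hH] by (auto simp: stab_def cj_def permutes_inverses[OF hp])
    show "stab (h z) \<subseteq> cj h ` stab z"
    proof
      fix g assume "g \<in> stab (h z)"
      hence g: "g \<in> H" "g (h z) = h z" by (auto simp: stab_def)
      define c where "c = inv h \<circ> g \<circ> h"
      have "c \<in> H" unfolding c_def using perm_groupD(3,4)[OF pg] hH g(1) by blast
      moreover have "c z = z" unfolding c_def using g(2) by (simp add: permutes_inverses[OF hp])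
      moreover have "cj h c = g" unfolding cj_def c_def
        by (simp add: fun_eq_iff permutes_inverses[OF hp])
      ultimately show "g \<in> cj h ` stab z" unfolding stab_def by force
    qed
  qed
  define R where "R a b \<longleftrightarrow> a \<in> D \<and> b \<in> D \<and> stab a = stab b" for a b
  have "(\<forall>a\<in>D. \<forall>b\<in>D. R a b) \<or> (\<forall>a b. R a b \<longrightarrow> a = b)"
  proof (rule prim_rel[OF prim])
    show "R a b \<Longrightarrow> a \<in> D \<and> b \<in> D" for a b unfolding R_def by simp
    show "a \<in> D \<Longrightarrow> R a a" for a unfolding R_def by simp
    show "R a b \<Longrightarrow> R b a" for a b unfolding R_def by simp
    show "R a b \<Longrightarrow> R b c \<Longrightarrow> R a c" for a b c unfolding R_def by simp
    show "R (h a) (h b)" if hH: "h \<in> H" and Rab: "R a b" for h a b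
    proof -
      have hp: "h permutes D" using perm_groupD(1)[OF pg hH] .
      have ab: "a \<in> D" "b \<in> D" "stab a = stab b" using Rab R_def by auto
      have "stab (h a) = stab (h b)" using stab_cj[OF hH ab(1)] stab_cj[OF hH ab(2)] ab(3) by simp
      thus ?thesis unfolding R_def using ab hp by (simp add: permutes_in_image)
    qed
  qed
  thus ?thesis
  proof
    assume t: "\<forall>a\<in>D. \<forall>b\<in>D. R a b"
    have "\<forall>z\<in>D. \<forall>h\<in>H. h z = z \<longrightarrow> h = id"
    proof (intro ballI impI)
      fix z h assume z: "z \<in> D" and hH: "h \<in> H" and hz: "h z = z"
      have hp: "h permutes D" using perm_groupD(1)[OF pg hH] .
      show "h = id"
      proof
        fix w show "h w = id w"
        proof (cases "w \<in> D")
          case True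
          hence "stab z = stab w" using t z unfolding R_def by blast
          moreover have "h \<in> stab z" using hH hz by (simp add: stab_def)
          ultimately show ?thesis by (simp add: stab_def)
        next
          case False thus ?thesis using permutes_not_in[OF hp] by simp
        qed
      qed
    qed
    thus ?thesis using regular_prime[OF prim] nr by blast
  next
    assume t: "\<forall>a b. R a b \<longrightarrow> a = b"
    have ne: "stab x \<noteq> stab y" using t x y xy unfolding R_def by blast
    show ?thesis
    proof (rule ccontr)
      assume "\<not> (\<exists>f\<in>H. f x = x \<and> f y \<noteq> y)"
      hence sub: "stab x \<subseteq> stab y" by (auto simp: stab_def)
      obtain h where h: "h \<in> H" "h x = y" using tr x y by (auto simp: transitive_on_def)
      have "stab y = cj h ` stab x" using stab_cj[OF h(1) x] h(2) by simp
      hence "card (stab y) = card (stab x)" using card_image[OF cjinj[OF h(1)]] by simp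
      moreover have fs: "finite (stab y)" by (rule finite_subset[OF _ finH]) (auto simp: stab_def)
      ultimately have "stab x = stab y" using card_subset_eq[OF fs sub] by simp
      thus False using ne by simp
    qed
  qed
qed


lemma prod_dom_mem: "x \<in> prod_dom D n \<longleftrightarrow> (\<forall>i<n. x i \<in> D) \<and> (\<forall>i. n \<le> i \<longrightarrow> x i = undefined)"
  by (auto simp: prod_dom_def PiE_def extensional_def Pi_def)

lemma prod_dom_eqI: "x \<in> prod_dom D n \<Longrightarrow> y \<in> prod_dom D n \<Longrightarrow> (\<And>i. i < n \<Longrightarrow> x i = y i) \<Longrightarrow> x = y"
  unfolding prod_dom_mem by (metis ext not_le)

lemma wr_apply: "x \<in> prod_dom D n \<Longrightarrow>
   wr_elem D n h \<sigma> x = (\<lambda>j. if j < n then h (inv \<sigma> j) (x (inv \<sigma> j)) else undefined)"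
  by (simp add: wr_elem_def restrict_def)

lemma wr_out: "x \<notin> prod_dom D n \<Longrightarrow> wr_elem D n h \<sigma> x = x"
  by (simp add: wr_elem_def)

lemma inv_lt: assumes "\<sigma> permutes {0..<(n::nat)}" "j < n" shows "inv \<sigma> j < n"
proof -
  have "inv \<sigma> j \<in> {0..<n} \<longleftrightarrow> j \<in> {0..<n}" by (rule permutes_in_image[OF permutes_inv[OF assms(1)]])
  thus ?thesis using assms(2) by simp
qed

lemma perm_lt: assumes "\<sigma> permutes {0..<(n::nat)}" "j < n" shows "\<sigma> j < n"
proof -
  have "\<sigma> j \<in> {0..<n} \<longleftrightarrow> j \<in> {0..<n}" by (rule permutes_in_image[OF assms(1)])
  thus ?thesis using assms(2) by simp
qed

lemma wr_in:
  assumes h: "\<And>i. i < n \<Longrightarrow> h i permutes D" and s: "\<sigma> permutes {0..<n}" and x: "x \<in> prod_dom D n"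
  shows "wr_elem D n h \<sigma> x \<in> prod_dom D n"
proof -
  have "h (inv \<sigma> j) (x (inv \<sigma> j)) \<in> D" if "j < n" for j
  proof -
    have "inv \<sigma> j < n" using inv_lt[OF s that] .
    hence "x (inv \<sigma> j) \<in> D" "h (inv \<sigma> j) permutes D" using x h by (auto simp: prod_dom_mem)
    thus ?thesis by (simp add: permutes_in_image)
  qed
  thus ?thesis using x by (simp add: wr_apply prod_dom_mem)
qed

lemma wr_comp:
  assumes h': "\<And>i. i < n \<Longrightarrow> h' i permutes D" and s: "\<sigma> permutes {0..<n}" and s': "\<sigma>' permutes {0..<n}"
  shows "wr_elem D n h \<sigma> \<circ> wr_elem D n h' \<sigma>' = wr_elem D n (\<lambda>i. h (\<sigma>' i) \<circ> h' i) (\<sigma> \<circ> \<sigma>')"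
proof
  fix x show "(wr_elem D n h \<sigma> \<circ> wr_elem D n h' \<sigma>') x = wr_elem D n (\<lambda>i. h (\<sigma>' i) \<circ> h' i) (\<sigma> \<circ> \<sigma>') x"
  proof (cases "x \<in> prod_dom D n")
    case True
    have y: "wr_elem D n h' \<sigma>' x \<in> prod_dom D n" by (rule wr_in[OF h' s' True])
    have iv: "inv (\<sigma> \<circ> \<sigma>') = inv \<sigma>' \<circ> inv \<sigma>"
      by (rule o_inv_distrib[OF permutes_bij[OF s] permutes_bij[OF s']])
    show ?thesis
      using True y inv_lt[OF s] by (auto simp: wr_apply iv permutes_inverses[OF s'] fun_eq_iff)
  next
    case False thus ?thesis by (simp add: wr_out)
  qed
qed

lemma wr_cong:
  assumes s: "\<sigma> permutes {0..<n}" and e: "\<And>i x. i < n \<Longrightarrow> x \<in> D \<Longrightarrow> h i x = h' i x"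
  shows "wr_elem D n h \<sigma> = wr_elem D n h' \<sigma>"
proof
  fix x show "wr_elem D n h \<sigma> x = wr_elem D n h' \<sigma> x"
  proof (cases "x \<in> prod_dom D n")
    case True
    show ?thesis using True e inv_lt[OF s] by (auto simp: wr_apply prod_dom_mem fun_eq_iff)
  next
    case False thus ?thesis by (simp add: wr_out)
  qed
qed

lemma wr_id: "wr_elem D n (\<lambda>_. id) id = id"
proof
  fix x show "wr_elem D n (\<lambda>_. id) id x = id x"
  proof (cases "x \<in> prod_dom D n")
    case True
    show ?thesis using True by (auto simp: wr_apply prod_dom_mem fun_eq_iff)
  next
    case False thus ?thesis by (simp add: wr_out)
  qed
qed

lemma wr_inv:
  assumes h: "\<And>i. i < n \<Longrightarrow> h i permutes D" and s: "\<sigma> permutes {0..<n}"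
  shows "inv (wr_elem D n h \<sigma>) = wr_elem D n (\<lambda>i. inv (h (inv \<sigma> i))) (inv \<sigma>)"
    and "wr_elem D n h \<sigma> permutes prod_dom D n"
proof -
  let ?g = "wr_elem D n h \<sigma>" and ?g' = "wr_elem D n (\<lambda>i. inv (h (inv \<sigma> i))) (inv \<sigma>)"
  have si: "inv \<sigma> permutes {0..<n}" using permutes_inv[OF s] .
  have h'p: "inv (h (inv \<sigma> i)) permutes D" if "i < n" for i
    using permutes_inv[OF h[OF inv_lt[OF s that]]] .
  have "?g \<circ> ?g' = wr_elem D n (\<lambda>i. h (inv \<sigma> i) \<circ> inv (h (inv \<sigma> i))) (\<sigma> \<circ> inv \<sigma>)"
    by (rule wr_comp[OF h'p s si])
  also have "\<dots> = wr_elem D n (\<lambda>_. id) id"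
  proof -
    have "\<sigma> \<circ> inv \<sigma> = id" using permutes_inv_o(1)[OF s] .
    moreover have "wr_elem D n (\<lambda>i. h (inv \<sigma> i) \<circ> inv (h (inv \<sigma> i))) id = wr_elem D n (\<lambda>_. id) id"
      by (rule wr_cong[OF permutes_id])
         (simp add: permutes_inv_o(1)[OF h[OF inv_lt[OF s]]])
    ultimately show ?thesis by simp
  qed
  finally have c1: "?g \<circ> ?g' = id" by (simp add: wr_id)
  have "?g' \<circ> ?g = wr_elem D n (\<lambda>i. inv (h (inv \<sigma> (\<sigma> i))) \<circ> h i) (inv \<sigma> \<circ> \<sigma>)"
    by (rule wr_comp[OF h si s])
  also have "\<dots> = wr_elem D n (\<lambda>_. id) id"
  proof -
    have "inv \<sigma> \<circ> \<sigma> = id" using permutes_inv_o(2)[OF s] .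
    moreover have "wr_elem D n (\<lambda>i. inv (h (inv \<sigma> (\<sigma> i))) \<circ> h i) id = wr_elem D n (\<lambda>_. id) id"
      by (rule wr_cong[OF permutes_id])
         (simp add: permutes_inverses(2)[OF s] permutes_inv_o(2)[OF h])
    ultimately show ?thesis by simp
  qed
  finally have c2: "?g' \<circ> ?g = id" by (simp add: wr_id)
  show "inv ?g = ?g'" by (rule inv_unique_comp[OF c1 c2])
  have b: "bij ?g" by (rule o_bij[OF c2 c1])
  show "?g permutes prod_dom D n"
    unfolding permutes_def using b by (auto simp: wr_out bij_iff)
qed

lemma perm_group_wr:
  assumes H: "perm_group D H" and K: "perm_group {0..<n} K"
  shows "perm_group (prod_dom D n) (wr_prod D H K n)"
  unfolding perm_group_def
proof (intro conjI ballI subsetI)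
  fix g assume "g \<in> wr_prod D H K n"
  then obtain h \<sigma> where g: "g = wr_elem D n h \<sigma>" "\<forall>i<n. h i \<in> H" "\<sigma> \<in> K" by (auto simp: wr_prod_def)
  have hp: "\<And>i. i < n \<Longrightarrow> h i permutes D" using g(2) perm_groupD(1)[OF H] by blast
  have sp: "\<sigma> permutes {0..<n}" using perm_groupD(1)[OF K g(3)] .
  show "g \<in> {g. g permutes prod_dom D n}" using wr_inv(2)[OF hp sp] g(1) by simp
  have "\<forall>i<n. inv (h (inv \<sigma> i)) \<in> H" using g(2) perm_groupD(4)[OF H] inv_lt[OF sp] by blast
  moreover have "inv \<sigma> \<in> K" using perm_groupD(4)[OF K g(3)] .
  moreover have "inv g = wr_elem D n (\<lambda>i. inv (h (inv \<sigma> i))) (inv \<sigma>)"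
    using wr_inv(1)[where h=h and \<sigma>=\<sigma> and n=n and D=D, OF hp sp] g(1) by simp
  ultimately show "inv g \<in> wr_prod D H K n" unfolding wr_prod_def by blast
  fix g' assume "g' \<in> wr_prod D H K n"
  then obtain h' \<sigma>' where g': "g' = wr_elem D n h' \<sigma>'" "\<forall>i<n. h' i \<in> H" "\<sigma>' \<in> K" by (auto simp: wr_prod_def)
  have hp': "\<And>i. i < n \<Longrightarrow> h' i permutes D" using g'(2) perm_groupD(1)[OF H] by blast
  have sp': "\<sigma>' permutes {0..<n}" using perm_groupD(1)[OF K g'(3)] .
  have "\<forall>i<n. h (\<sigma>' i) \<circ> h' i \<in> H" using g(2) g'(2) perm_groupD(3)[OF H] perm_lt[OF sp'] by blast
  moreover have "\<sigma> \<circ> \<sigma>' \<in> K" using perm_groupD(3)[OF K g(3) g'(3)] .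
  ultimately show "g \<circ> g' \<in> wr_prod D H K n" unfolding wr_prod_def
    using wr_comp[where h=h and h'=h' and \<sigma>=\<sigma> and \<sigma>'=\<sigma>' and n=n and D=D, OF hp' sp sp'] g(1) g'(1) by blast
next
  have "wr_elem D n (\<lambda>_. id) id \<in> wr_prod D H K n" unfolding wr_prod_def
    using perm_groupD(2)[OF H] perm_groupD(2)[OF K] by blast
  thus "id \<in> wr_prod D H K n" by (simp add: wr_id)
qed

lemma transitive_wr:
  assumes H: "transitive_on D H" and K: "id \<in> K"
  shows "transitive_on (prod_dom D n) (wr_prod D H K n)"
  unfolding transitive_on_def
proof (intro ballI)
  fix x y assume x: "x \<in> prod_dom D n" and y: "y \<in> prod_dom D n"
  have "\<forall>i. \<exists>f. i < n \<longrightarrow> f \<in> H \<and> f (x i) = y i" using H x y unfolding transitive_on_def prod_dom_mem by metis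
  then obtain h where h: "\<And>i. i < n \<Longrightarrow> h i \<in> H \<and> h i (x i) = y i" by metis
  have "wr_elem D n h id x = y"
    using x y h by (intro prod_dom_eqI[OF _ y]) (auto simp: wr_apply prod_dom_mem)
  moreover have "wr_elem D n h id \<in> wr_prod D H K n" unfolding wr_prod_def using h K by blast
  ultimately show "\<exists>g\<in>wr_prod D H K n. g x = y" by blast
qed


lemma wr_primitive:
  assumes prim: "primitive D H" and nr: "\<not> (\<exists>g\<in>H. H = cyc g \<and> prime (card H))"
    and n: "1 \<le> n" and K: "perm_group {0..<n} K" "transitive_on {0..<n} K"
  shows "primitive (prod_dom D n) (wr_prod D H K n)"
proof -
  have pg: "perm_group D H" and tr: "transitive_on D H" and c2: "2 \<le> card D" and fin: "finite D"
    using prim by (auto simp: primitive_def)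
  let ?O = "prod_dom D n" and ?G = "wr_prod D H K n"
  have finO: "finite ?O" unfolding prod_dom_def using fin by (simp add: finite_PiE)
  have cardO: "card ?O = card D ^ n" unfolding prod_dom_def by (simp add: card_PiE fin)
  have "card D \<le> card D ^ n" by (rule self_le_power) (use c2 n in auto)
  hence c2O: "2 \<le> card ?O" using c2 cardO by simp
  have pgO: "perm_group ?O ?G" by (rule perm_group_wr[OF pg K(1)])
  have trO: "transitive_on ?O ?G" by (rule transitive_wr[OF tr perm_groupD(2)[OF K(1)]])
  have idH: "id \<in> H" using perm_groupD(2)[OF pg] .
  have part: "P = {?O} \<or> (\<forall>B\<in>P. card B = 1)" if part: "is_partition ?O P" and pres: "preserves ?G P" for P
  proof -
    define E where "E x y \<longleftrightarrow> (\<exists>B\<in>P. x \<in> B \<and> y \<in> B)" for x y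
    have UP: "\<Union>P = ?O" using part unfolding is_partition_def by simp
    have EO: "x \<in> ?O \<and> y \<in> ?O" if Exy: "E x y" for x y
    proof -
      obtain B where "B \<in> P" "x \<in> B" "y \<in> B" using Exy unfolding E_def by blast
      hence "x \<in> \<Union>P" "y \<in> \<Union>P" by auto
      thus ?thesis using UP by simp
    qed
    have Erefl: "E x x" if "x \<in> ?O" for x
    proof -
      have "x \<in> \<Union>P" using UP that by simp
      then obtain B where "B \<in> P" "x \<in> B" by blast
      thus ?thesis unfolding E_def by blast
    qed
    have Esym: "E y x" if "E x y" for x y using that unfolding E_def by blast
    have disj: "B = C" if "B \<in> P" "C \<in> P" "y \<in> B" "y \<in> C" for B C y
    proof (rule ccontr)
      assume "B \<noteq> C"
      hence "B \<inter> C = {}" using part that(1,2) unfolding is_partition_def by blast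
      thus False using that(3,4) by blast
    qed
    have Etrans: "E x z" if Exy: "E x y" and Eyz: "E y z" for x y z
    proof -
      obtain B where B: "B \<in> P" "x \<in> B" "y \<in> B" using Exy unfolding E_def by blast
      obtain C where C: "C \<in> P" "y \<in> C" "z \<in> C" using Eyz unfolding E_def by blast
      have "B = C" by (rule disj[OF B(1) C(1) B(3) C(2)])
      hence "x \<in> B \<and> z \<in> B" using B C by simp
      thus ?thesis unfolding E_def using B(1) by (rule_tac bexI[of _ B])
    qed
    have Einv: "E (g x) (g y)" if gG: "g \<in> ?G" and Exy: "E x y" for g x y
    proof -
      obtain B where B: "B \<in> P" "x \<in> B" "y \<in> B" using Exy unfolding E_def by blast
      have "g ` B \<in> P" using pres gG B(1) unfolding preserves_def by (elim ballE) auto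
      moreover have "g x \<in> g ` B \<and> g y \<in> g ` B" using B by auto
      ultimately show ?thesis unfolding E_def by (rule_tac bexI[of _ "g ` B"])
    qed
    have base: "wr_elem D n h id \<in> ?G" if hH: "\<And>i. i<n \<Longrightarrow> h i \<in> H" for h
       unfolding wr_prod_def mem_Collect_eq
       by (intro exI[of _ h] exI[of _ id]) (simp add: hH perm_groupD(2)[OF K(1)])
    have upd: "x(i := d) \<in> ?O" if "x \<in> ?O" "i < n" "d \<in> D" for x i d
      using that by (auto simp: prod_dom_mem)
    have single: "wr_elem D n (\<lambda>j. if j = i then f else id) id (x(i:=d)) = x(i := f d)"
      if "x \<in> ?O" "i < n" "d \<in> D" for x i f d
      using that upd[OF that] by (intro ext) (auto simp: wr_apply prod_dom_mem)
    have single_in: "wr_elem D n (\<lambda>j. if j = i then f else id) id \<in> ?G" if "f \<in> H" for i f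
      using base idH that by simp
    have total: "\<forall>x\<in>?O. \<forall>y\<in>?O. E x y" if ne: "E x0 y0" "x0 \<noteq> y0" for x0 y0
    proof -
      have x0: "x0 \<in> ?O" "y0 \<in> ?O" using EO ne(1) by auto
      obtain i where i: "i < n" "x0 i \<noteq> y0 i" using prod_dom_eqI[OF x0] ne(2) by blast
      have xi: "x0 i \<in> D" "y0 i \<in> D" using x0 i(1) by (auto simp: prod_dom_mem)
      obtain f where f: "f \<in> H" "f (x0 i) = x0 i" "f (y0 i) \<noteq> y0 i"
        using stab_sep[OF prim nr xi i(2)] by blast
      have fp: "f permutes D" using perm_groupD(1)[OF pg f(1)] .
      let ?g = "wr_elem D n (\<lambda>j. if j = i then f else id) id"
      have "?g (x0(i := x0 i)) = x0(i := f (x0 i))" by (rule single[OF x0(1) i(1) xi(1)])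
      hence gx: "?g x0 = x0" using f(2) by simp
      have "?g (y0(i := y0 i)) = y0(i := f (y0 i))" by (rule single[OF x0(2) i(1) xi(2)])
      hence gy: "?g y0 = y0(i := f (y0 i))" by simp
      have "E (?g x0) (?g y0)" by (rule Einv[OF single_in[OF f(1)] ne(1)])
      hence E1: "E y0 (y0(i := f (y0 i)))" using gx gy Esym Etrans ne(1) by metis
      have fyD: "f (y0 i) \<in> D" using fp xi(2) by (simp add: permutes_in_image)
      have Ci: "\<forall>u\<in>?O. \<forall>d\<in>D. \<forall>e\<in>D. E (u(i:=d)) (u(i:=e))"
      proof -
        define R where "R d e \<longleftrightarrow> d \<in> D \<and> e \<in> D \<and> E (y0(i:=d)) (y0(i:=e))" for d e
        have "(\<forall>d\<in>D. \<forall>e\<in>D. R d e) \<or> (\<forall>d e. R d e \<longrightarrow> d = e)"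
        proof (rule prim_rel[OF prim])
          show "R d e \<Longrightarrow> d \<in> D \<and> e \<in> D" for d e unfolding R_def by simp
          show "d \<in> D \<Longrightarrow> R d d" for d unfolding R_def using Erefl upd x0(2) i(1) by blast
          show "R d e \<Longrightarrow> R e d" for d e unfolding R_def using Esym by blast
          show "R d e \<Longrightarrow> R e c \<Longrightarrow> R d c" for d e c unfolding R_def using Etrans by blast
          show "R (h d) (h e)" if hH: "h \<in> H" and Rde: "R d e" for h d e
          proof -
            have de: "d \<in> D" "e \<in> D" "E (y0(i:=d)) (y0(i:=e))" using Rde R_def by auto
            have hp: "h permutes D" using perm_groupD(1)[OF pg hH] .
            have "E (y0(i:=h d)) (y0(i:=h e))"
              using Einv[OF single_in[of h i, OF hH] de(3)] single[OF x0(2) i(1) de(1), of h] single[OF x0(2) i(1) de(2), of h]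
              by simp
            thus ?thesis unfolding R_def using de hp by (simp add: permutes_in_image)
          qed
        qed
        moreover have "R (y0 i) (f (y0 i))" unfolding R_def using xi(2) fyD E1 by simp
        ultimately have t: "\<forall>d\<in>D. \<forall>e\<in>D. R d e" using f(3) by metis
        show ?thesis
        proof (intro ballI)
          fix u d e assume u: "u \<in> ?O" and d: "d \<in> D" and e: "e \<in> D"
          have "\<forall>j. \<exists>k. j < n \<longrightarrow> k \<in> H \<and> k (y0 j) = u j"
            using tr x0(2) u unfolding transitive_on_def prod_dom_mem by metis
          then obtain k where k: "\<And>j. j < n \<Longrightarrow> k j \<in> H \<and> k j (y0 j) = u j" by metis
          define kk where "kk j = (if j = i then id else k j)" for j
          have gin: "wr_elem D n kk id \<in> ?G" using base k idH unfolding kk_def by simp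
          have gm: "wr_elem D n kk id (y0(i:=c)) = u(i:=c)" if "c \<in> D" for c
            using upd[OF x0(2) i(1) that] k u x0(2) i(1)
            by (intro ext) (auto simp: wr_apply prod_dom_mem kk_def)
          have "E (y0(i:=d)) (y0(i:=e))" using t d e R_def by blast
          from Einv[OF gin this] show "E (u(i:=d)) (u(i:=e))" using gm d e by simp
        qed
      qed
      have Cj: "\<forall>u\<in>?O. \<forall>d\<in>D. \<forall>e\<in>D. E (u(j:=d)) (u(j:=e))" if j: "j < n" for j
      proof (intro ballI)
        fix u d e assume u: "u \<in> ?O" and d: "d \<in> D" and e: "e \<in> D"
        obtain \<sigma> where \<sigma>: "\<sigma> \<in> K" "\<sigma> i = j" using K(2) i(1) j unfolding transitive_on_def by fastforce
        have sp: "\<sigma> permutes {0..<n}" using perm_groupD(1)[OF K(1) \<sigma>(1)] .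
        define u' where "u' = (\<lambda>k. if k < n then u (\<sigma> k) else undefined)"
        have u': "u' \<in> ?O" using u perm_lt[OF sp] unfolding u'_def prod_dom_mem by auto
        have gin: "wr_elem D n (\<lambda>_. id) \<sigma> \<in> ?G" unfolding wr_prod_def using idH \<sigma>(1) by blast
        have gm: "wr_elem D n (\<lambda>_. id) \<sigma> (u'(i:=c)) = u(j:=c)" if "c \<in> D" for c
        proof (rule ext)
          fix l
          show "wr_elem D n (\<lambda>_. id) \<sigma> (u'(i:=c)) l = (u(j:=c)) l"
          proof (cases "l < n")
            case True
            have "inv \<sigma> l = i \<longleftrightarrow> l = j" using permutes_inv_eq[OF sp] \<sigma>(2) by metis
            thus ?thesis using True upd[OF u' i(1) that] inv_lt[OF sp True]
              by (simp add: wr_apply u'_def permutes_inverses[OF sp])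
          next
            case False thus ?thesis using upd[OF u' i(1) that] u j by (simp add: wr_apply prod_dom_mem)
          qed
        qed
        have "E (u'(i:=d)) (u'(i:=e))" using Ci u' d e by blast
        from Einv[OF gin this] show "E (u(j:=d)) (u(j:=e))" using gm d e by simp
      qed
      show ?thesis
      proof (intro ballI)
        fix u v assume u: "u \<in> ?O" and v: "v \<in> ?O"
        define w where "w k = (\<lambda>l. if l < k then v l else u l)" for k
        have wO: "w k \<in> ?O" for k using u v unfolding w_def prod_dom_mem by auto
        have "k \<le> n \<longrightarrow> E u (w k)" for k
        proof (induction k)
          case 0 show ?case using Erefl[OF u] by (simp add: w_def)
        next
          case (Suc k)
          show ?case
          proof
            assume k: "Suc k \<le> n"
            hence kn: "k < n" by simp
            have uk: "u k \<in> D" "v k \<in> D" using u v kn by (auto simp: prod_dom_mem)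
            have "E ((w k)(k := u k)) ((w k)(k := v k))" using Cj[OF kn] wO uk by blast
            moreover have "(w k)(k := u k) = w k" by (auto simp: w_def)
            moreover have "(w k)(k := v k) = w (Suc k)" by (auto simp: w_def)
            ultimately have "E (w k) (w (Suc k))" by simp
            thus "E u (w (Suc k))" using Suc k Etrans by simp
          qed
        qed
        moreover have "w n = v" using u v unfolding w_def prod_dom_mem by auto
        ultimately show "E u v" by auto
      qed
    qed
    show ?thesis
    proof (cases "\<exists>x y. E x y \<and> x \<noteq> y")
      case True
      then obtain x0 y0 where "E x0 y0" "x0 \<noteq> y0" by blast
      hence t: "\<forall>x\<in>?O. \<forall>y\<in>?O. E x y" using total by blast
      have all: "B = ?O" if B: "B \<in> P" for B
      proof -
        have "B \<noteq> {}" "B \<subseteq> ?O" using part B unfolding is_partition_def by auto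
        then obtain b where b: "b \<in> B" by blast
        have "y \<in> B" if y: "y \<in> ?O" for y
        proof -
          have "E b y" using t b \<open>B \<subseteq> ?O\<close> y by blast
          then obtain C where C: "C \<in> P" "b \<in> C" "y \<in> C" unfolding E_def by blast
          have "C = B" by (rule disj[OF C(1) B C(2) b])
          thus ?thesis using C by simp
        qed
        thus ?thesis using \<open>B \<subseteq> ?O\<close> by blast
      qed
      have "?O \<noteq> {}" using c2O by auto
      hence "P \<noteq> {}" using part unfolding is_partition_def by auto
      hence "P = {?O}" using all by blast
      thus ?thesis by simp
    next
      case False
      have "card B = 1" if B: "B \<in> P" for B
      proof -
        have "B \<noteq> {}" using part B unfolding is_partition_def by auto
        then obtain b where b: "b \<in> B" by blast
        have "y = b" if "y \<in> B" for y using False B b that unfolding E_def by blast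
        hence "B = {b}" using b by blast
        thus ?thesis by simp
      qed
      thus ?thesis by blast
    qed
  qed
  show ?thesis unfolding primitive_def using finO c2O pgO trO part fin by blast
qed


lemma block_partition:
  assumes fin: "finite D" and c2: "2 \<le> card D" and Oass: "Ob \<subseteq> {0..<n}" "Ob \<noteq> {}" "Ob \<noteq> {0..<n}"
    and G: "\<And>g. g \<in> G \<Longrightarrow> \<exists>h \<sigma>. g = wr_elem D n h \<sigma> \<and> (\<forall>i<n. h i permutes D) \<and> \<sigma> permutes {0..<n} \<and> \<sigma> ` Ob = Ob"
  shows "preserves_nontrivial_partition (prod_dom D n) G"
proof -
  let ?O = "prod_dom D n"
  define blk where "blk a = {x\<in>?O. \<forall>i\<in>Ob. x i = a i}" for a
  define P where "P = blk ` ?O"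
  define b where "b = card D ^ (n - card Ob)"
  have Olt: "i \<in> Ob \<Longrightarrow> i < n" for i using Oass(1) by auto
  have finOO: "finite Ob" using Oass(1) finite_subset by blast
  have part: "is_partition ?O P"
    unfolding is_partition_def
  proof (intro conjI ballI impI)
    show "\<Union> P = ?O" unfolding P_def blk_def by blast
    show "{} \<notin> P" unfolding P_def blk_def by blast
    fix B C assume "B \<in> P" "C \<in> P" "B \<noteq> C"
    then obtain a c where ac: "a \<in> ?O" "c \<in> ?O" "B = blk a" "C = blk c" unfolding P_def by blast
    show "B \<inter> C = {}"
    proof (rule ccontr)
      assume "B \<inter> C \<noteq> {}"
      then obtain x where "x \<in> blk a" "x \<in> blk c" using ac by blast
      hence "\<forall>i\<in>Ob. a i = c i" unfolding blk_def by auto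
      hence "blk a = blk c" unfolding blk_def by auto
      thus False using ac \<open>B \<noteq> C\<close> by simp
    qed
  qed
  have cardb: "card (blk a) = b" if a: "a \<in> ?O" for a
  proof -
    let ?R = "{0..<n} - Ob"
    have "bij_betw (\<lambda>x. restrict x ?R) (blk a) (PiE ?R (\<lambda>_. D))"
      unfolding bij_betw_def
    proof (intro conjI)
      show "inj_on (\<lambda>x. restrict x ?R) (blk a)"
      proof (rule inj_onI)
        fix x y assume xy: "x \<in> blk a" "y \<in> blk a" "restrict x ?R = restrict y ?R"
        show "x = y"
        proof (rule prod_dom_eqI)
          show "x \<in> ?O" "y \<in> ?O" using xy unfolding blk_def by auto
          fix i assume i: "i < n"
          show "x i = y i"
          proof (cases "i \<in> Ob")
            case True thus ?thesis using xy unfolding blk_def by auto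
          next
            case False hence "restrict x ?R i = x i" "restrict y ?R i = y i" using i by auto
            thus ?thesis using xy(3) by simp
          qed
        qed
      qed
      show "(\<lambda>x. restrict x ?R) ` blk a = PiE ?R (\<lambda>_. D)"
      proof
        show "(\<lambda>x. restrict x ?R) ` blk a \<subseteq> PiE ?R (\<lambda>_. D)"
        proof
          fix z assume "z \<in> (\<lambda>x. restrict x ?R) ` blk a"
          then obtain x where "x \<in> blk a" "z = restrict x ?R" by blast
          thus "z \<in> PiE ?R (\<lambda>_. D)" unfolding blk_def prod_dom_mem by (simp add: restrict_PiE_iff)
        qed
        show "PiE ?R (\<lambda>_. D) \<subseteq> (\<lambda>x. restrict x ?R) ` blk a"
        proof
          fix y assume y: "y \<in> PiE ?R (\<lambda>_. D)"
          define x where "x = (\<lambda>i. if i \<in> Ob then a i else y i)"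
          have "x \<in> ?O" unfolding prod_dom_mem
          proof (intro conjI allI impI)
            fix i assume "i < n" thus "x i \<in> D" using a y unfolding x_def prod_dom_mem by auto
          next
            fix i assume "n \<le> i"
            hence "i \<notin> Ob" "i \<notin> ?R" using Olt by force+
            thus "x i = undefined" unfolding x_def using PiE_arb[OF y] by simp
          qed
          hence "x \<in> blk a" unfolding blk_def x_def by auto
          moreover have "restrict x ?R = y"
          proof
            fix i show "restrict x ?R i = y i"
              using PiE_arb[OF y, of i] unfolding x_def by auto
          qed
          ultimately show "y \<in> (\<lambda>x. restrict x ?R) ` blk a" by blast
        qed
      qed
    qed
    hence "card (blk a) = card (PiE ?R (\<lambda>_. D))" by (rule bij_betw_same_card)
    also have "\<dots> = card D ^ card ?R" by (simp add: card_PiE)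
    also have "card ?R = n - card Ob" using card_Diff_subset[OF finOO Oass(1)] by simp
    finally show ?thesis unfolding b_def .
  qed
  have cO: "card Ob < n"
  proof -
    have "Ob \<subset> {0..<n}" using Oass(1,3) by blast
    hence "card Ob < card {0..<n}" by (rule psubset_card_mono[rotated]) simp
    thus ?thesis by simp
  qed
  have cO1: "0 < card Ob" using Oass(2) finOO by (simp add: card_gt_0_iff)
  have b1: "1 < b" unfolding b_def by (rule one_less_power) (use c2 cO in auto)
  have cardO: "card ?O = card D ^ n" unfolding prod_dom_def by (simp add: card_PiE fin)
  have b2: "b < card ?O" unfolding cardO b_def by (rule power_strict_increasing) (use c2 cO cO1 in auto)
  have pres: "preserves G P"
    unfolding preserves_def
  proof (intro ballI)
    fix g B assume gG: "g \<in> G" and B: "B \<in> P"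
    obtain a where a: "a \<in> ?O" "B = blk a" using B unfolding P_def by blast
    obtain h \<sigma> where hs: "g = wr_elem D n h \<sigma>" "\<forall>i<n. h i permutes D" "\<sigma> permutes {0..<n}" "\<sigma> ` Ob = Ob"
      using G[OF gG] by blast
    have hp: "\<And>i. i < n \<Longrightarrow> h i permutes D" using hs(2) by blast
    have gp: "g permutes ?O" using wr_inv(2)[OF hp hs(3)] hs(1) by simp
    have sO: "\<sigma> i \<in> Ob" if iO: "i \<in> Ob" for i using hs(4) iO by blast
    have siO: "inv \<sigma> i \<in> Ob" if iO: "i \<in> Ob" for i
    proof -
      have "i \<in> \<sigma> ` Ob" using hs(4) iO by simp
      then obtain k where "k \<in> Ob" "i = \<sigma> k" by blast
      thus ?thesis using permutes_inverses(2)[OF hs(3)] by simp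
    qed
    have ga: "g a \<in> ?O" using wr_in[OF hp hs(3) a(1)] hs(1) by simp
    have "g ` blk a = blk (g a)"
    proof
      show "g ` blk a \<subseteq> blk (g a)"
      proof
        fix z assume "z \<in> g ` blk a"
        then obtain x where x: "x \<in> blk a" "z = g x" by blast
        have xO: "x \<in> ?O" using x(1) unfolding blk_def by simp
        have "z \<in> ?O" using wr_in[OF hp hs(3) xO] hs(1) x(2) by simp
        moreover have "z j = g a j" if j: "j \<in> Ob" for j
          using x xO a(1) Olt[OF j] siO[OF j] unfolding hs(1) blk_def by (simp add: wr_apply)
        ultimately show "z \<in> blk (g a)" unfolding blk_def by simp
      qed
      show "blk (g a) \<subseteq> g ` blk a"
      proof
        fix y assume y: "y \<in> blk (g a)"
        have yO: "y \<in> ?O" using y unfolding blk_def by simp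
        define x where "x = inv g y"
        have xO: "x \<in> ?O" unfolding x_def using permutes_in_image[OF permutes_inv[OF gp]] yO by simp
        have gx: "g x = y" unfolding x_def using permutes_inverses(1)[OF gp] by simp
        have "x i = a i" if i: "i \<in> Ob" for i
        proof -
          have j: "\<sigma> i \<in> Ob" "\<sigma> i < n" using sO[OF i] Olt by auto
          have e: "inv \<sigma> (\<sigma> i) = i" using permutes_inverses(2)[OF hs(3)] by simp
          have "y (\<sigma> i) = g a (\<sigma> i)" using y j(1) unfolding blk_def by simp
          hence "h i (x i) = h i (a i)" using gx[symmetric] xO a(1) j(2) e unfolding hs(1)
            by (simp add: wr_apply)
          thus ?thesis using permutes_inj[OF hp[OF Olt[OF i]]] by (simp add: inj_eq)
        qed
        hence "x \<in> blk a" using xO unfolding blk_def by simp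
        thus "y \<in> g ` blk a" using gx by blast
      qed
    qed
    thus "g ` B \<in> P" using a ga unfolding P_def by simp
  qed
  show ?thesis unfolding preserves_nontrivial_partition_def
    using part cardb b1 b2 pres unfolding P_def by blast
qed


lemma part_i:
  assumes prim: "primitive D H" and nr: "\<not> (\<exists>g\<in>H. H = cyc g \<and> prime (card H))"
    and n: "2 \<le> n" and K: "perm_group {0..<n} K" "transitive_on {0..<n} K"
    and nc: "\<forall>\<sigma>\<in>K. \<not> transitive_on {0..<n} (cyc \<sigma>)"
  shows "primitive (prod_dom D n) (wr_prod D H K n) \<and>
         (\<forall>g\<in>wr_prod D H K n. imprimitive_perm (prod_dom D n) g)"
proof
  show "primitive (prod_dom D n) (wr_prod D H K n)"
    by (rule wr_primitive[OF prim nr _ K]) (use n in simp)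
  have pg: "perm_group D H" and fin: "finite D" and c2: "2 \<le> card D"
    using prim by (auto simp: primitive_def)
  show "\<forall>g\<in>wr_prod D H K n. imprimitive_perm (prod_dom D n) g"
  proof
    fix g assume "g \<in> wr_prod D H K n"
    then obtain h \<sigma> where g: "g = wr_elem D n h \<sigma>" "\<forall>i<n. h i \<in> H" "\<sigma> \<in> K"
      by (auto simp: wr_prod_def)
    have sp: "\<sigma> permutes {0..<n}" using perm_groupD(1)[OF K(1) g(3)] .
    have hp: "\<forall>i<n. h i permutes D" using g(2) perm_groupD(1)[OF pg] by blast
    have "\<not> transitive_on {0..<n} (cyc \<sigma>)" using nc g(3) by blast
    then obtain i j where ij: "i < n" "j < n" "\<forall>f\<in>cyc \<sigma>. f i \<noteq> j"
      unfolding transitive_on_def by auto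
    define Ob where "Ob = (\<lambda>k. (\<sigma> ^^ k) i) ` UNIV"
    have powp: "(\<sigma> ^^ k) permutes {0..<n}" for k
      using perm_groupD(1)[OF K(1) perm_group_pow[OF K(1) g(3)]] .
    have Osub: "Ob \<subseteq> {0..<n}"
    proof
      fix y assume "y \<in> Ob" then obtain k where "y = (\<sigma> ^^ k) i" unfolding Ob_def by blast
      thus "y \<in> {0..<n}" using perm_lt[OF powp[of k] ij(1)] by simp
    qed
    have iO: "i \<in> Ob" unfolding Ob_def by (rule range_eqI[of _ _ 0]) simp
    have jO: "j \<notin> Ob" using ij(3) unfolding Ob_def cyc_def by auto
    have sub: "\<sigma> ` Ob \<subseteq> Ob"
    proof
      fix y assume "y \<in> \<sigma> ` Ob"
      then obtain k where "y = \<sigma> ((\<sigma> ^^ k) i)" unfolding Ob_def by blast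
      hence "y = (\<sigma> ^^ Suc k) i" by simp
      thus "y \<in> Ob" unfolding Ob_def by blast
    qed
    have finO: "finite Ob" using Osub finite_subset by blast
    have "card (\<sigma> ` Ob) = card Ob" using card_image[OF permutes_inj_on[OF sp]] .
    hence sO: "\<sigma> ` Ob = Ob" using card_subset_eq[OF finO sub] by simp
    have "preserves_nontrivial_partition (prod_dom D n) {g}"
    proof (rule block_partition[OF fin c2 Osub])
      show "Ob \<noteq> {}" using iO by blast
      show "Ob \<noteq> {0..<n}" using jO ij(2) by auto
      fix g' assume "g' \<in> {g}"
      thus "\<exists>h \<sigma>. g' = wr_elem D n h \<sigma> \<and> (\<forall>i<n. h i permutes D) \<and> \<sigma> permutes {0..<n} \<and> \<sigma> ` Ob = Ob"
        using g(1) hp sp sO by blast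
    qed
    thus "imprimitive_perm (prod_dom D n) g" by (simp add: imprimitive_perm_def)
  qed
qed

lemma sym_perm_group: "perm_group D {f. f permutes D}"
  unfolding perm_group_def by (auto intro: permutes_id permutes_compose permutes_inv)

lemma sym_primitive:
  assumes fin: "finite D" and c2: "2 \<le> card D"
  shows "primitive D {f. f permutes D}"
  unfolding primitive_def
proof (intro conjI allI impI)
  show "finite D" "2 \<le> card D" by (fact fin, fact c2)
  show "perm_group D {f. f permutes D}" by (rule sym_perm_group)
  show "transitive_on D {f. f permutes D}" unfolding transitive_on_def
  proof (intro ballI)
    fix x y assume "x \<in> D" "y \<in> D"
    hence "transpose x y permutes D" by (rule permutes_swap_id)
    moreover have "transpose x y x = y" by simp
    ultimately show "\<exists>g\<in>{f. f permutes D}. g x = y" by blast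
  qed
  fix P assume "is_partition D P \<and> preserves {f. f permutes D} P"
  hence part: "is_partition D P" and pres: "preserves {f. f permutes D} P" by auto
  have BD: "B \<subseteq> D" "B \<noteq> {}" if "B \<in> P" for B using part that unfolding is_partition_def by auto
  have disj: "B = C" if "B \<in> P" "C \<in> P" "y \<in> B" "y \<in> C" for B C y
  proof (rule ccontr)
    assume "B \<noteq> C"
    hence "B \<inter> C = {}" using part that(1,2) unfolding is_partition_def by blast
    thus False using that(3,4) by blast
  qed
  have big: "B = D" if B: "B \<in> P" and xy: "x \<in> B" "y \<in> B" "x \<noteq> y" for B x y
  proof (rule ccontr)
    assume "B \<noteq> D"
    then obtain z where z: "z \<in> D" "z \<notin> B" using BD[OF B] by blast
    have yD: "y \<in> D" using BD[OF B] xy by blast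
    let ?t = "transpose y z"
    have tp: "?t permutes D" using permutes_swap_id[OF yD z(1)] .
    have tB: "?t ` B \<in> P" using pres B tp unfolding preserves_def by blast
    have "x \<noteq> z" using xy z by blast
    hence "?t x = x" using xy(3) by simp
    hence "x \<in> ?t ` B" using xy(1) by (metis imageI)
    hence "?t ` B = B" using disj[OF tB B _ xy(1)] by blast
    moreover have "z \<in> ?t ` B" using xy(2) by (metis imageI transpose_apply_first)
    ultimately show False using z by blast
  qed
  show "P = {D} \<or> (\<forall>B\<in>P. card B = 1)"
  proof (cases "D \<in> P")
    case True
    have "C = D" if C: "C \<in> P" for C
    proof -
      obtain c where "c \<in> C" using BD[OF C] by blast
      moreover have "c \<in> D" using BD[OF C] \<open>c \<in> C\<close> by blast
      ultimately show ?thesis using disj[OF C True] by blast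
    qed
    thus ?thesis using True by blast
  next
    case False
    have "card B = 1" if B: "B \<in> P" for B
    proof -
      obtain b where b: "b \<in> B" using BD[OF B] by blast
      have "y = b" if "y \<in> B" for y using big[OF B b that] False B by blast
      hence "B = {b}" using b by blast
      thus ?thesis by simp
    qed
    thus ?thesis by blast
  qed
qed


definition xm :: "nat \<Rightarrow> nat \<Rightarrow> nat \<Rightarrow> nat" where
  "xm m v = (\<lambda>i. if i < 2^m then xor i v else i)"

lemma xor_lt: "(x::nat) < 2^m \<Longrightarrow> y < 2^m \<Longrightarrow> xor x y < 2^m"
proof -
  assume a: "x < 2^m" "y < 2^m"
  hence "take_bit m x = x" "take_bit m y = y" by (simp_all add: take_bit_nat_eq_self_iff)
  hence "take_bit m (xor x y) = xor x y" by (metis take_bit_xor)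
  thus ?thesis by (metis take_bit_nat_less_exp)
qed

lemma xor_cancel: "xor (xor (x::nat) v) v = x"
  by (simp add: xor.assoc)

lemma xm_comp: "v < 2^m \<Longrightarrow> w < 2^m \<Longrightarrow> xm m v \<circ> xm m w = xm m (xor w v)"
  by (auto simp: xm_def fun_eq_iff xor_lt xor.assoc)

lemma xm_invol: "v < 2^m \<Longrightarrow> xm m v \<circ> xm m v = id"
  by (auto simp: xm_def fun_eq_iff xor_lt xor_cancel)

lemma xm_permutes: assumes "v < 2^m" shows "xm m v permutes {0..<2^m}"
proof -
  have "bij (xm m v)" by (rule o_bij[OF xm_invol[OF assms] xm_invol[OF assms]])
  thus ?thesis unfolding permutes_def by (auto simp: xm_def bij_iff)
qed

lemma xm_inv: "v < 2^m \<Longrightarrow> inv (xm m v) = xm m v"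
  by (rule inv_unique_comp[OF xm_invol xm_invol])

lemma C2pow_eq: "C2pow m = {xm m v | v. v < 2^m}"
  by (simp add: C2pow_def xm_def)

lemma C2_perm_group: "perm_group {0..<2^m} (C2pow m)"
  unfolding perm_group_def C2pow_eq
proof (intro conjI ballI subsetI)
  fix g assume "g \<in> {xm m v |v. v < 2 ^ m}"
  then obtain v where v: "g = xm m v" "v < 2^m" by blast
  show "g \<in> {g. g permutes {0..<2 ^ m}}" using xm_permutes[OF v(2)] v(1) by simp
  show "inv g \<in> {xm m v |v. v < 2 ^ m}" using xm_inv[OF v(2)] v by blast
  fix g' assume "g' \<in> {xm m v |v. v < 2 ^ m}"
  then obtain w where w: "g' = xm m w" "w < 2^m" by blast
  show "g \<circ> g' \<in> {xm m v |v. v < 2 ^ m}" using xm_comp[OF v(2) w(2)] v w xor_lt[OF w(2) v(2)] by blast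
next
  have "id = xm m 0" by (simp add: xm_def fun_eq_iff)
  thus "id \<in> {xm m v |v. v < 2 ^ m}" by auto
qed

lemma C2_transitive: "transitive_on {0..<2^m} (C2pow m)"
  unfolding transitive_on_def C2pow_eq
proof (intro ballI)
  fix x y :: nat assume "x \<in> {0..<2^m}" "y \<in> {0..<2^m}"
  hence xy: "x < 2^m" "y < 2^m" by auto
  have "xm m (xor x y) x = y" using xy by (simp add: xm_def xor.assoc[symmetric])
  moreover have "xor x y < 2^m" using xor_lt[OF xy] .
  ultimately show "\<exists>g\<in>{xm m v |v. v < 2 ^ m}. g x = y" by blast
qed

inductive_set xspan :: "nat set \<Rightarrow> nat set" for V where
  xs0: "0 \<in> xspan V"
| xsx: "x \<in> xspan V \<Longrightarrow> v \<in> V \<Longrightarrow> xor x v \<in> xspan V"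

lemma xspan_lt: assumes V: "\<And>v. v \<in> V \<Longrightarrow> v < 2^m" and x: "x \<in> xspan V" shows "x < (2::nat)^m"
  using x
proof (induction x rule: xspan.induct)
  case xs0 thus ?case by simp
next
  case (xsx x v) thus ?case using xor_lt V by blast
qed

lemma xspan_empty: "xspan {} = {0}"
proof
  show "xspan {} \<subseteq> {0}"
  proof
    fix x assume "x \<in> xspan {}" thus "x \<in> {0}" by (induction x rule: xspan.induct) auto
  qed
  show "{0} \<subseteq> xspan {}" using xs0 by blast
qed

lemma xspan_insert: "xspan (insert v V) \<subseteq> xspan V \<union> (\<lambda>x. xor x v) ` xspan V"
proof
  fix x assume "x \<in> xspan (insert v V)"
  thus "x \<in> xspan V \<union> (\<lambda>x. xor x v) ` xspan V"
  proof (induction x rule: xspan.induct)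
    case xs0 thus ?case using xspan.xs0 by blast
  next
    case (xsx x w)
    show ?case
    proof (cases "x \<in> xspan V")
      case True
      show ?thesis
      proof (cases "w = v")
        case True thus ?thesis using \<open>x \<in> xspan V\<close> by blast
      next
        case False hence "w \<in> V" using xsx(2) by simp
        thus ?thesis using xspan.xsx[OF \<open>x \<in> xspan V\<close>] by blast
      qed
    next
      case False
      then obtain y where y: "y \<in> xspan V" "x = xor y v" using xsx(3) by blast
      show ?thesis
      proof (cases "w = v")
        case True thus ?thesis using y xor_cancel by simp
      next
        case False hence wV: "w \<in> V" using xsx(2) by simp
        have "xor x w = xor (xor y w) v" using y(2) by (metis xor.assoc xor.commute)
        moreover have "xor y w \<in> xspan V" using xspan.xsx[OF y(1) wV] .
        ultimately show ?thesis by blast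
      qed
    qed
  qed
qed

lemma xspan_card: "finite V \<Longrightarrow> finite (xspan V) \<and> card (xspan V) \<le> 2 ^ card V"
proof (induction V rule: finite_induct)
  case empty thus ?case by (simp add: xspan_empty)
next
  case (insert v V)
  have fin: "finite (xspan V \<union> (\<lambda>x. xor x v) ` xspan V)" using insert.IH by simp
  have "card (xspan (insert v V)) \<le> card (xspan V \<union> (\<lambda>x. xor x v) ` xspan V)"
    by (rule card_mono[OF fin xspan_insert])
  also have "\<dots> \<le> card (xspan V) + card ((\<lambda>x. xor x v) ` xspan V)" by (rule card_Un_le)
  also have "\<dots> \<le> card (xspan V) + card (xspan V)" using card_image_le[OF conjunct1[OF insert.IH]] by simp
  also have "\<dots> \<le> 2 ^ card V + 2 ^ card V" using insert.IH by simp
  also have "\<dots> = 2 ^ card (insert v V)" using insert(1,2) by simp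
  finally show ?case using finite_subset[OF xspan_insert fin] by simp
qed


lemma primitive_not_pnp:
  assumes "primitive D G" shows "\<not> preserves_nontrivial_partition D G"
proof
  assume "preserves_nontrivial_partition D G"
  then obtain P b where P: "is_partition D P" "\<forall>B\<in>P. card B = b" "1 < b" "b < card D" "preserves G P"
    unfolding preserves_nontrivial_partition_def by blast
  have "P = {D} \<or> (\<forall>B\<in>P. card B = 1)" using assms P(1,5) unfolding primitive_def by blast
  moreover have "D \<noteq> {}" using P(3,4) by auto
  hence "P \<noteq> {}" using P(1) unfolding is_partition_def by auto
  then obtain B where "B \<in> P" by blast
  ultimately show False using P(2,3,4) by auto
qed

lemma part_ii:
  assumes m: "1 \<le> m"
  shows "primitive (prod_dom {0..<3::nat} (2^m)) (wr_prod {0..<3} S3 (C2pow m) (2^m)) \<and>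
         card (prod_dom {0..<3::nat} (2^m)) = 3^(2^m) \<and>
         (\<forall>S. S \<subseteq> wr_prod {0..<3} S3 (C2pow m) (2^m) \<and> finite S \<and> card S < m \<longrightarrow>
              preserves_nontrivial_partition (prod_dom {0..<3::nat} (2^m)) (gen_by S)) \<and>
         (\<forall>S. S \<subseteq> wr_prod {0..<3} S3 (C2pow m) (2^m) \<and> finite S \<and>
              primitive (prod_dom {0..<3::nat} (2^m)) (gen_by S) \<longrightarrow> m \<le> card S)"
proof -
  let ?D = "{0..<3::nat}" and ?n = "2^m::nat"
  let ?O = "prod_dom ?D ?n" and ?G = "wr_prod ?D S3 (C2pow m) ?n"
  have S3p: "primitive ?D S3" unfolding S3_def by (rule sym_primitive) auto
  have S3pg: "perm_group ?D S3" unfolding S3_def by (rule sym_perm_group)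
  have "card S3 = fact 3" unfolding S3_def by (rule card_permutations) auto
  hence cS3: "card S3 = 6" by (simp add: fact_numeral)
  have np: "\<not> prime (6::nat)" using prime_product[of 2 3] by simp
  have nr: "\<not> (\<exists>g\<in>S3. S3 = cyc g \<and> prime (card S3))" using cS3 np by simp
  have prim: "primitive ?O ?G" by (rule wr_primitive[OF S3p nr _ C2_perm_group C2_transitive]) simp
  have cardO: "card ?O = 3^?n" unfolding prod_dom_def by (simp add: card_PiE)
  have claim: "preserves_nontrivial_partition ?O (gen_by S)"
    if S: "S \<subseteq> ?G" "finite S" "card S < m" for S
  proof -
    have rep: "\<exists>v. v < 2^m \<and> (\<exists>h. (\<forall>i<?n. h i \<in> S3) \<and> s = wr_elem ?D ?n h (xm m v))"
      if sS: "s \<in> S" for s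
    proof -
      have "s \<in> ?G" using S(1) sS by blast
      then obtain h \<sigma> where "s = wr_elem ?D ?n h \<sigma>" "\<forall>i<?n. h i \<in> S3" "\<sigma> \<in> C2pow m"
        unfolding wr_prod_def by blast
      moreover obtain v where "\<sigma> = xm m v" "v < 2^m" using \<open>\<sigma> \<in> C2pow m\<close> unfolding C2pow_eq by blast
      ultimately show ?thesis by blast
    qed
    define vv where "vv s = (SOME v. v < 2^m \<and> (\<exists>h. (\<forall>i<?n. h i \<in> S3) \<and> s = wr_elem ?D ?n h (xm m v)))" for s
    have vv: "vv s < 2^m \<and> (\<exists>h. (\<forall>i<?n. h i \<in> S3) \<and> s = wr_elem ?D ?n h (xm m (vv s)))"
      if sS: "s \<in> S" for s
      unfolding vv_def by (rule someI_ex[OF rep[OF sS]])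
    define V where "V = vv ` S"
    define Ob where "Ob = xspan V"
    have Vlt: "v < 2^m" if vV: "v \<in> V" for v using vv vV unfolding V_def by blast
    have finV: "finite V" using S(2) unfolding V_def by simp
    have cV: "card V < m" using card_image_le[OF S(2), of vv] S(3) unfolding V_def by simp
    have Osub: "Ob \<subseteq> {0..<?n}"
    proof
      fix x assume "x \<in> Ob" thus "x \<in> {0..<?n}" using xspan_lt[OF Vlt] unfolding Ob_def by auto
    qed
    have One: "Ob \<noteq> {}" using xspan.xs0 unfolding Ob_def by auto
    have "card Ob \<le> 2^card V" using xspan_card[OF finV] unfolding Ob_def by simp
    also have "\<dots> < 2^m" using cV by simp
    finally have OneqD: "Ob \<noteq> {0..<?n}" by auto
    define K' where "K' = {\<sigma>. \<sigma> permutes {0..<?n} \<and> \<sigma> ` Ob = Ob}"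
    have K'pg: "perm_group {0..<?n} K'"
      unfolding perm_group_def
    proof (intro conjI ballI subsetI)
      show "id \<in> K'" unfolding K'_def by (simp add: permutes_id)
      fix g assume g: "g \<in> K'"
      hence gp: "g permutes {0..<?n}" and gO: "g ` Ob = Ob" unfolding K'_def by auto
      show "g \<in> {g. g permutes {0..<?n}}" using gp by simp
      have "inv g ` Ob = inv g ` g ` Ob" using gO by simp
      also have "\<dots> = (inv g \<circ> g) ` Ob" by (simp add: image_comp)
      also have "\<dots> = Ob" using permutes_inv_o(2)[OF gp] by simp
      finally show "inv g \<in> K'" unfolding K'_def using permutes_inv[OF gp] by simp
      fix g' assume "g' \<in> K'"
      hence gp': "g' permutes {0..<?n}" and gO': "g' ` Ob = Ob" unfolding K'_def by auto
      have "(g \<circ> g') ` Ob = g ` (g' ` Ob)" by (rule image_comp[symmetric])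
      hence "(g \<circ> g') ` Ob = Ob" using gO gO' by simp
      thus "g \<circ> g' \<in> K'" unfolding K'_def using permutes_compose[OF gp' gp] by simp
    qed
    have pgW: "perm_group ?O (wr_prod ?D S3 K' ?n)" by (rule perm_group_wr[OF S3pg K'pg])
    have xmK: "xm m v \<in> K'" if vV: "v \<in> V" for v
    proof -
      have vl: "v < 2^m" using Vlt[OF vV] .
      have sub: "xm m v ` Ob \<subseteq> Ob"
      proof
        fix y assume "y \<in> xm m v ` Ob"
        then obtain x where x: "x \<in> Ob" "y = xm m v x" by blast
        have "x < 2^m" using Osub x(1) by auto
        hence "y = xor x v" using x(2) by (simp add: xm_def)
        thus "y \<in> Ob" using xspan.xsx[of x V v] x(1) vV unfolding Ob_def by simp
      qed
      have "Ob \<subseteq> xm m v ` Ob"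
      proof
        fix x assume x: "x \<in> Ob"
        have "x = xm m v (xm m v x)" using xm_invol[OF vl] by (metis comp_apply id_apply)
        moreover have "xm m v x \<in> Ob" using sub x by blast
        ultimately show "x \<in> xm m v ` Ob" by blast
      qed
      thus ?thesis unfolding K'_def using sub xm_permutes[OF vl] by auto
    qed
    have gen: "gen_by S \<subseteq> wr_prod ?D S3 K' ?n"
    proof
      fix g assume "g \<in> gen_by S" thus "g \<in> wr_prod ?D S3 K' ?n"
      proof (induction rule: gen_by.induct)
        case gen_id show ?case using perm_groupD(2)[OF pgW] .
      next
        case (gen_el s)
        obtain h where h: "\<forall>i<?n. h i \<in> S3" "s = wr_elem ?D ?n h (xm m (vv s))" using vv[OF gen_el] by blast
        have "vv s \<in> V" using gen_el unfolding V_def by simp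
        hence "xm m (vv s) \<in> K'" by (rule xmK)
        thus ?case unfolding wr_prod_def using h by blast
      next
        case (gen_comp g h) thus ?case using perm_groupD(3)[OF pgW] by blast
      next
        case (gen_inv g) thus ?case using perm_groupD(4)[OF pgW] by blast
      qed
    qed
    show ?thesis
    proof (rule block_partition[OF _ _ Osub One OneqD])
      show "finite ?D" by simp
      show "2 \<le> card ?D" by simp
      fix g assume "g \<in> gen_by S"
      hence "g \<in> wr_prod ?D S3 K' ?n" using gen by blast
      then obtain h \<sigma> where hs: "g = wr_elem ?D ?n h \<sigma>" "\<forall>i<?n. h i \<in> S3" "\<sigma> \<in> K'"
        unfolding wr_prod_def by blast
      have "\<forall>i<?n. h i permutes ?D" using hs(2) unfolding S3_def by blast
      thus "\<exists>h \<sigma>. g = wr_elem ?D ?n h \<sigma> \<and> (\<forall>i<?n. h i permutes ?D) \<and> \<sigma> permutes {0..<?n} \<and> \<sigma> ` Ob = Ob"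
        using hs(1,3) unfolding K'_def by blast
    qed
  qed
  have last: "m \<le> card S" if S: "S \<subseteq> ?G" "finite S" "primitive ?O (gen_by S)" for S
  proof (rule ccontr)
    assume "\<not> m \<le> card S"
    hence "preserves_nontrivial_partition ?O (gen_by S)" using claim S by simp
    thus False using primitive_not_pnp[OF S(3)] by simp
  qed
  show ?thesis using prim cardO claim last by blast
qed


theorem mainTheorem17:
  shows "(\<forall>(D::'a set) H (K::(nat \<Rightarrow> nat) set) n.
           primitive D H \<and> \<not> (\<exists>g\<in>H. H = cyc g \<and> prime (card H)) \<and>
           2 \<le> n \<and> perm_group {0..<n} K \<and> transitive_on {0..<n} K \<and>
           (\<forall>\<sigma>\<in>K. \<not> transitive_on {0..<n} (cyc \<sigma>))
         \<longrightarrow> primitive (prod_dom D n) (wr_prod D H K n) \<and>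
             (\<forall>g\<in>wr_prod D H K n. imprimitive_perm (prod_dom D n) g))
       \<and>
       (\<forall>m::nat. 1 \<le> m \<longrightarrow>
          (let \<Omega> = prod_dom {0..<3::nat} (2^m); G = wr_prod {0..<3} S3 (C2pow m) (2^m) in
            primitive \<Omega> G \<and> card \<Omega> = 3^(2^m) \<and>
            (\<forall>S. S \<subseteq> G \<and> finite S \<and> card S < m \<longrightarrow> preserves_nontrivial_partition \<Omega> (gen_by S)) \<and>
            (\<forall>S. S \<subseteq> G \<and> finite S \<and> primitive \<Omega> (gen_by S) \<longrightarrow> m \<le> card S)))"
proof (rule conjI)
  show "\<forall>(D::'a set) H (K::(nat \<Rightarrow> nat) set) n.
           primitive D H \<and> \<not> (\<exists>g\<in>H. H = cyc g \<and> prime (card H)) \<and>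
           2 \<le> n \<and> perm_group {0..<n} K \<and> transitive_on {0..<n} K \<and>
           (\<forall>\<sigma>\<in>K. \<not> transitive_on {0..<n} (cyc \<sigma>))
         \<longrightarrow> primitive (prod_dom D n) (wr_prod D H K n) \<and>
             (\<forall>g\<in>wr_prod D H K n. imprimitive_perm (prod_dom D n) g)"
    by (intro allI impI, elim conjE, rule part_i; assumption)
  show "\<forall>m::nat. 1 \<le> m \<longrightarrow>
          (let \<Omega> = prod_dom {0..<3::nat} (2^m); G = wr_prod {0..<3} S3 (C2pow m) (2^m) in
            primitive \<Omega> G \<and> card \<Omega> = 3^(2^m) \<and>
            (\<forall>S. S \<subseteq> G \<and> finite S \<and> card S < m \<longrightarrow> preserves_nontrivial_partition \<Omega> (gen_by S)) \<and>
            (\<forall>S. S \<subseteq> G \<and> finite S \<and> primitive \<Omega> (gen_by S) \<longrightarrow> m \<le> card S))"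
    unfolding Let_def using part_ii by blast
qed

end
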